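(* Let $p\in\mathcal{P}$ and $\varphi\in\mathrm{Stab}_{G^*}(p)$. Then: (i) if $\varphi\in G$, all orbits of $\langle\varphi\rangle$ on $I$ have the same size $b=|\varphi|$ (the order of $\varphi$), and if $r$ is the number of orbits then $br=2n$; (ii) if $\varphi\in G^*\setminus G$, all orbits of $\langle\varphi\rangle$ on $I$ have the same size $b=|\varphi|$, $b$ is even, and if $r$ is the number of orbits then $br=2n$.
   Context: Fix $n\ge 2$, $W=\{1,\dots,n\}$, $M=\{n+1,\dots,2n\}$, $I=W\cup M$. Permutations compose right-to-left. A preference profile is a function $p$ on $I$ assigning to each $x\in W$ a linear order $p(x)$ on $M$ and to each $y\in M$ a linear order $p(y)$ on $W$; $\mathcal{P}$ is the set of preference profiles. $G^*=\{\varphi\in\mathrm{Sym}(I):\{\varphi(W),\varphi(M)\}=\{W,M\}\}$ and $G=\{\varphi\in\mathrm{Sym}(I):\varphi(W)=W,\ \varphi(M)=M\}$. For a linear order $R$ on $X\subseteq I$ and $\varphi\in\mathrm{Sym}(I)$, $\varphi R$ is the relation on $\varphi(X)$ with $(a,b)\in\varphi R$ iff $(\varphi^{-1}(a),\varphi^{-1}(b))\in R$. For $\varphi\in G^*$, $p^\varphi(z)=\varphi\,p(\varphi^{-1}(z))$, and $\mathrm{Stab}_{G^*}(p)=\{\varphi\in G^*:p^\varphi=p\}$. *)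

theory Defs
  imports "HOL-Combinatorics.Permutations"
begin

text \<open>Linear orders are (reflexive) library linear orders on the given carrier.\<close>

definition Wset :: "nat \<Rightarrow> nat set" where "Wset n = {1..n}"
definition Mset :: "nat \<Rightarrow> nat set" where "Mset n = {n+1..2*n}"
definition Iset :: "nat \<Rightarrow> nat set" where "Iset n = Wset n \<union> Mset n"

definition is_profile :: "nat \<Rightarrow> (nat \<Rightarrow> nat rel) \<Rightarrow> bool" where
  "is_profile n p \<longleftrightarrow>
     (\<forall>x\<in>Wset n. linear_order_on (Mset n) (p x)) \<and>
     (\<forall>y\<in>Mset n. linear_order_on (Wset n) (p y))"

definition Gstar :: "nat \<Rightarrow> (nat \<Rightarrow> nat) set" where
  "Gstar n = {\<phi>. \<phi> permutes Iset n \<and>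
     ((\<phi> ` Wset n = Wset n \<and> \<phi> ` Mset n = Mset n) \<or>
      (\<phi> ` Wset n = Mset n \<and> \<phi> ` Mset n = Wset n))}"

definition Gsub :: "nat \<Rightarrow> (nat \<Rightarrow> nat) set" where
  "Gsub n = {\<phi>. \<phi> permutes Iset n \<and> \<phi> ` Wset n = Wset n \<and> \<phi> ` Mset n = Mset n}"

definition act_rel :: "(nat \<Rightarrow> nat) \<Rightarrow> nat rel \<Rightarrow> nat rel" where
  "act_rel \<phi> R = {(a, b). (inv \<phi> a, inv \<phi> b) \<in> R}"

definition act_profile :: "(nat \<Rightarrow> nat) \<Rightarrow> (nat \<Rightarrow> nat rel) \<Rightarrow> (nat \<Rightarrow> nat rel)" where
  "act_profile \<phi> p = (\<lambda>z. act_rel \<phi> (p (inv \<phi> z)))"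

text \<open>Stabiliser; profiles are only meaningful on I, so equality is required on I.\<close>
definition Stab :: "nat \<Rightarrow> (nat \<Rightarrow> nat rel) \<Rightarrow> (nat \<Rightarrow> nat) set" where
  "Stab n p = {\<phi> \<in> Gstar n. \<forall>z\<in>Iset n. act_profile \<phi> p z = p z}"

definition perm_ord :: "(nat \<Rightarrow> nat) \<Rightarrow> nat" where
  "perm_ord \<phi> = (LEAST k. 0 < k \<and> \<phi> ^^ k = id)"

definition cyc_orbit :: "(nat \<Rightarrow> nat) \<Rightarrow> nat \<Rightarrow> nat set" where
  "cyc_orbit \<phi> x = {(\<phi> ^^ k) x | k. True}"

definition cyc_orbits :: "(nat \<Rightarrow> nat) \<Rightarrow> nat set \<Rightarrow> nat set set" where
  "cyc_orbits \<phi> A = cyc_orbit \<phi> ` A"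

end

theory Submission
  imports Defs "HOL-Combinatorics.Cycles"
begin

lemma lin_aut_id:
  assumes lin: "linear_order_on A R" and fin: "finite A"
    and maps: "\<forall>a\<in>A. \<psi> a \<in> A" and inj: "inj_on \<psi> A"
    and pres: "\<forall>a b. (a,b)\<in>R \<longleftrightarrow> (\<psi> a, \<psi> b)\<in>R"
  shows "\<forall>a\<in>A. \<psi> a = a"
proof -
  have sub: "R \<subseteq> A \<times> A" and rf: "\<forall>x\<in>A. (x,x)\<in>R" and tr: "trans R" and an: "antisym R"
    and tot: "total_on A R"
    using lin unfolding linear_order_on_def partial_order_on_def preorder_on_def refl_on_def by auto
  define D where "D a = {b\<in>A. (b,a)\<in>R}" for a
  have imA: "\<psi> ` A = A"
    using maps inj fin by (meson endo_inj_surj image_subsetI)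
  have Dpsi: "D (\<psi> a) = \<psi> ` D a" if "a\<in>A" for a
  proof
    show "\<psi> ` D a \<subseteq> D (\<psi> a)" using pres maps unfolding D_def by auto
    show "D (\<psi> a) \<subseteq> \<psi> ` D a"
    proof
      fix b assume "b \<in> D (\<psi> a)"
      then have b: "b\<in>A" "(b, \<psi> a)\<in>R" unfolding D_def by auto
      then obtain c where c: "c\<in>A" "b = \<psi> c" using imA by blast
      then have "(c,a)\<in>R" using b pres by auto
      then show "b \<in> \<psi> ` D a" using c unfolding D_def by auto
    qed
  qed
  have cardeq: "card (D (\<psi> a)) = card (D a)" if "a\<in>A" for a
    using Dpsi[OF that] inj unfolding D_def by (simp add: card_image inj_on_subset)
  have Dinj: "a = a'" if "a\<in>A" "a'\<in>A" "card (D a) = card (D a')" for a a'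
  proof -
    have key: "a = a'" if "a\<in>A" "a'\<in>A" "card (D a) = card (D a')" "(a,a')\<in>R" for a a'
    proof -
      have "D a \<subseteq> D a'" using that tr unfolding D_def trans_def by blast
      moreover have "finite (D a')" using fin unfolding D_def by auto
      ultimately have "D a = D a'" using that(3) by (simp add: card_subset_eq)
      moreover have "a' \<in> D a'" using rf that unfolding D_def by auto
      ultimately have "(a',a)\<in>R" unfolding D_def by auto
      then show ?thesis using that(4) an unfolding antisym_def by blast
    qed
    show ?thesis
    proof (cases "a = a'")
      case False
      then have "(a,a')\<in>R \<or> (a',a)\<in>R" using tot that unfolding total_on_def by blast
      then show ?thesis using key that by metis
    qed
  qed
  show ?thesis using Dinj cardeq maps by blast
qed

theorem proposition15:
  fixes n :: nat and p :: "nat \<Rightarrow> nat rel" and \<phi> :: "nat \<Rightarrow> nat"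
  assumes "n \<ge> 2"
    and "is_profile n p"
    and "\<phi> \<in> Stab n p"
  shows "(\<phi> \<in> Gsub n \<longrightarrow>
            (\<forall>x\<in>Iset n. card (cyc_orbit \<phi> x) = perm_ord \<phi>) \<and>
            perm_ord \<phi> * card (cyc_orbits \<phi> (Iset n)) = 2 * n)
       \<and> (\<phi> \<in> Gstar n - Gsub n \<longrightarrow>
            (\<forall>x\<in>Iset n. card (cyc_orbit \<phi> x) = perm_ord \<phi>) \<and>
            even (perm_ord \<phi>) \<and>
            perm_ord \<phi> * card (cyc_orbits \<phi> (Iset n)) = 2 * n)"
proof -
  let ?W = "Wset n" and ?M = "Mset n" and ?I = "Iset n"
  have perm: "\<phi> permutes ?I" using assms(3) unfolding Stab_def Gstar_def by auto
  have finI: "finite ?I" unfolding Iset_def Wset_def Mset_def by auto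
  have finW: "finite ?W" and finM: "finite ?M" unfolding Wset_def Mset_def by auto
  have IWM: "?I = ?W \<union> ?M" unfolding Iset_def by simp
  have cardI: "card ?I = 2 * n"
  proof -
    have "?I = {1..2*n}" unfolding Iset_def Wset_def Mset_def by auto
    then show ?thesis by simp
  qed
  have W1: "1 \<in> ?W" and M1: "1 \<notin> ?M" and Mn: "n+1 \<in> ?M"
    using assms(1) unfolding Wset_def Mset_def by auto
  have WMne: "?W \<noteq> ?M" using W1 M1 by blast
  have Wne: "?W \<noteq> {}" using W1 by blast
  have Mne: "?M \<noteq> {}" using Mn by blast
  have stab: "\<forall>z\<in>?I. act_rel \<phi> (p (inv \<phi> z)) = p z"
    using assms(3) unfolding Stab_def act_profile_def by auto
  have invphi: "inv \<phi> (\<phi> a) = a" for a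
    using permutes_inverses(2)[OF perm] by simp
  have K1: "\<forall>z\<in>?I. \<forall>a b. (a,b)\<in>p z \<longleftrightarrow> (\<phi> a, \<phi> b) \<in> p (\<phi> z)"
  proof (intro ballI allI)
    fix z a b assume z: "z \<in> ?I"
    have "\<phi> z \<in> ?I" using z perm by (simp add: permutes_in_image)
    then have e: "act_rel \<phi> (p z) = p (\<phi> z)" using stab invphi by metis
    show "(a,b)\<in>p z \<longleftrightarrow> (\<phi> a, \<phi> b) \<in> p (\<phi> z)"
      by (subst e[symmetric]) (simp add: act_rel_def invphi)
  qed
  have permk: "(\<phi> ^^ k) permutes ?I" for k using perm by (rule permutes_funpow)
  have Kk: "\<forall>z\<in>?I. \<forall>a b. (a,b)\<in>p z \<longleftrightarrow> ((\<phi>^^k) a, (\<phi>^^k) b) \<in> p ((\<phi>^^k) z)" for k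
  proof (induction k)
    case (Suc k)
    show ?case
    proof (intro ballI allI)
      fix z a b assume z: "z\<in>?I"
      have "(\<phi>^^k) z \<in> ?I" using z permk by (simp add: permutes_in_image)
      then show "(a,b)\<in>p z \<longleftrightarrow> ((\<phi>^^Suc k) a, (\<phi>^^Suc k) b) \<in> p ((\<phi>^^Suc k) z)"
        using Suc z K1 by simp
    qed
  qed simp
  have profW: "\<forall>x\<in>?W. linear_order_on ?M (p x)" and profM: "\<forall>y\<in>?M. linear_order_on ?W (p y)"
    using assms(2) unfolding is_profile_def by auto
  have fixA: "\<forall>a\<in>A. \<psi> a = a"
    if lin: "linear_order_on A R" and fA: "finite A" and ps: "\<psi> permutes ?I"
      and pres: "\<forall>a b. (a,b)\<in>R \<longleftrightarrow> (\<psi> a, \<psi> b)\<in>R" for A R \<psi>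
  proof (rule lin_aut_id[OF lin fA _ _ pres])
    have sub: "R \<subseteq> A \<times> A" and rf: "\<forall>x\<in>A. (x,x)\<in>R"
      using lin unfolding linear_order_on_def partial_order_on_def preorder_on_def refl_on_def by auto
    show "\<forall>a\<in>A. \<psi> a \<in> A" using sub rf pres by blast
    show "inj_on \<psi> A" using permutes_inj[OF ps] by (meson inj_on_subset subset_UNIV)
  qed
  have free: "\<phi>^^k = id" if x: "x \<in> ?I" and fx: "(\<phi>^^k) x = x" for k x
  proof -
    let ?\<psi> = "\<phi>^^k"
    have onI: "\<forall>a\<in>?I. ?\<psi> a = a"
    proof (cases "x \<in> ?W")
      case True
      have "\<forall>a b. (a,b)\<in>p x \<longleftrightarrow> (?\<psi> a, ?\<psi> b)\<in>p x" using Kk[of k] x fx by metis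
      then have fM: "\<forall>a\<in>?M. ?\<psi> a = a" using fixA[OF _ finM permk] profW True by blast
      obtain y where y: "y \<in> ?M" using Mne by auto
      then have "\<forall>a b. (a,b)\<in>p y \<longleftrightarrow> (?\<psi> a, ?\<psi> b)\<in>p y" using Kk[of k] fM IWM by (metis UnI2)
      then have "\<forall>a\<in>?W. ?\<psi> a = a" using fixA[OF _ finW permk] profM y by blast
      then show ?thesis using fM IWM by auto
    next
      case False
      then have xM: "x \<in> ?M" using x IWM by auto
      have "\<forall>a b. (a,b)\<in>p x \<longleftrightarrow> (?\<psi> a, ?\<psi> b)\<in>p x" using Kk[of k] x fx by metis
      then have fW: "\<forall>a\<in>?W. ?\<psi> a = a" using fixA[OF _ finW permk] profM xM by blast
      obtain y where y: "y \<in> ?W" using Wne by auto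
      then have "\<forall>a b. (a,b)\<in>p y \<longleftrightarrow> (?\<psi> a, ?\<psi> b)\<in>p y" using Kk[of k] fW IWM by (metis UnI1)
      then have "\<forall>a\<in>?M. ?\<psi> a = a" using fixA[OF _ finM permk] profW y by blast
      then show ?thesis using fW IWM by auto
    qed
    show ?thesis
    proof
      fix a show "?\<psi> a = id a"
        using onI permutes_not_in[OF permk[of k]] by (cases "a \<in> ?I") auto
    qed
  qed
  define b where "b = perm_ord \<phi>"
  have ex: "\<exists>k. 0 < k \<and> \<phi> ^^ k = id"
    using permutation_is_nilpotent[of \<phi>] perm finI permutation_permutes by metis
  have bpos: "0 < b" and bid: "\<phi>^^b = id"
    using LeastI_ex[OF ex] unfolding b_def perm_ord_def by auto
  have bmin: "\<phi>^^k \<noteq> id" if "0 < k" "k < b" for k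
    using not_less_Least[of k "\<lambda>k. 0 < k \<and> \<phi> ^^ k = id"] that unfolding b_def perm_ord_def by auto
  have injk: "inj (\<phi>^^k)" for k using permutes_inj[OF permk] .
  have bmult: "\<phi>^^(b*m) = id" for m unfolding funpow_mult[symmetric] bid by (simp add: id_funpow)
  have modb: "(\<phi>^^k) = \<phi>^^(k mod b)" for k
  proof -
    have "\<phi>^^k = \<phi>^^(k mod b + b*(k div b))" by simp
    also have "\<dots> = \<phi>^^(k mod b)" by (simp only: funpow_add bmult) simp
    finally show ?thesis .
  qed
  have orb_eq: "cyc_orbit \<phi> x = (\<lambda>k. (\<phi>^^k) x) ` {..<b}" for x
    unfolding cyc_orbit_def using modb bpos
  proof (auto simp: image_def)
    fix k show "\<exists>xa\<in>{..<b}. (\<phi> ^^ k) x = (\<phi> ^^ xa) x"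
      using modb[of k] bpos by (intro bexI[of _ "k mod b"]) auto
  qed
  have card_orb: "card (cyc_orbit \<phi> x) = b" if x: "x\<in>?I" for x
  proof -
    have "inj_on (\<lambda>k. (\<phi>^^k) x) {..<b}"
    proof (rule inj_onI, rule ccontr)
      fix i j assume i: "i \<in> {..<b}" and j: "j \<in> {..<b}" and e: "(\<phi>^^i) x = (\<phi>^^j) x" and ne: "i \<noteq> j"
      have "\<exists>i j. i < j \<and> j < b \<and> (\<phi>^^i) x = (\<phi>^^j) x"
        using i j e ne by (metis lessThan_iff nat_neq_iff)
      then obtain i j where ij: "i < j" "j < b" "(\<phi>^^i) x = (\<phi>^^j) x" by blast
      have "(\<phi>^^i) ((\<phi>^^(j-i)) x) = (\<phi>^^i) x"
        using ij by (metis funpow_add le_add_diff_inverse less_imp_le o_apply)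
      then have "(\<phi>^^(j-i)) x = x" using injk[of i] by (simp add: inj_eq)
      then have "\<phi>^^(j-i) = id" using free x by blast
      then show False using bmin[of "j-i"] ij by simp
    qed
    then show ?thesis unfolding orb_eq by (simp add: card_image)
  qed
  have orb_sub: "cyc_orbit \<phi> x \<subseteq> ?I" if "x\<in>?I" for x
    unfolding cyc_orbit_def using that permk by (auto simp: permutes_in_image)
  have orb_self: "x \<in> cyc_orbit \<phi> x" for x
    unfolding cyc_orbit_def by (auto intro: exI[of _ 0])
  have orb_mem: "cyc_orbit \<phi> y = cyc_orbit \<phi> x" if yx: "y \<in> cyc_orbit \<phi> x" for x y
  proof -
    obtain k where k: "y = (\<phi>^^k) x" using yx unfolding cyc_orbit_def by blast
    have fa: "(\<phi>^^i) ((\<phi>^^j) z) = (\<phi>^^(i+j)) z" for i j z by (simp add: funpow_add)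
    have sub1: "cyc_orbit \<phi> y \<subseteq> cyc_orbit \<phi> x"
      unfolding cyc_orbit_def k using fa by blast
    have "x = (\<phi>^^(b*k - k)) y"
    proof -
      have "b*k - k + k = b*k" using bpos by (simp add: mult_le_mono1 less_imp_le_nat)
      then have "(\<phi>^^(b*k - k)) y = (\<phi>^^(b*k)) x"
        unfolding k by (metis funpow_add o_apply)
      then show ?thesis using bmult by simp
    qed
    then have "cyc_orbit \<phi> x \<subseteq> cyc_orbit \<phi> y"
      unfolding cyc_orbit_def using fa by blast
    then show ?thesis using sub1 by blast
  qed
  have count: "b * card (cyc_orbits \<phi> ?I) = 2 * n"
  proof -
    have U: "\<Union>(cyc_orbits \<phi> ?I) = ?I"
      unfolding cyc_orbits_def using orb_sub orb_self by blast
    have "b * card (cyc_orbits \<phi> ?I) = card (\<Union>(cyc_orbits \<phi> ?I))"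
    proof (rule card_partition)
      show "finite (cyc_orbits \<phi> ?I)" unfolding cyc_orbits_def using finI by simp
      show "finite (\<Union>(cyc_orbits \<phi> ?I))" using U finI by simp
      show "card c = b" if "c \<in> cyc_orbits \<phi> ?I" for c using that unfolding cyc_orbits_def using card_orb by auto
      show "c1 \<inter> c2 = {}" if "c1 \<in> cyc_orbits \<phi> ?I" "c2 \<in> cyc_orbits \<phi> ?I" "c1 \<noteq> c2" for c1 c2
        using that unfolding cyc_orbits_def using orb_mem by blast
    qed
    then show ?thesis using U cardI by simp
  qed
  have even_case: "even b" if "\<phi> \<in> Gstar n - Gsub n"
  proof -
    have sw: "\<phi> ` ?W = ?M" "\<phi> ` ?M = ?W" using that perm unfolding Gstar_def Gsub_def by auto
    have img: "(\<phi>^^k) ` ?W = (if even k then ?W else ?M)" for k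
    proof (induction k)
      case (Suc k)
      have "(\<phi>^^Suc k) ` ?W = \<phi> ` ((\<phi>^^k) ` ?W)" by (simp add: image_comp)
      then show ?case using Suc sw by auto
    qed simp
    show ?thesis
    proof (rule ccontr)
      assume "odd b"
      then have "(\<phi>^^b) ` ?W = ?M" using img by simp
      then show False using bid WMne by simp
    qed
  qed
  show ?thesis using card_orb count even_case unfolding b_def by blast
qed

end
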